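(* Let $\omega$ be a Bergman weight on the open unit disc $\mathbb{D}$. Let $k,\ell\in\mathbb{N}\cup\{0\}$ and let $\mathfrak{p}=(p_1,\dots,p_\ell)\in\mathbb{D}^\ell$, $\mathfrak{q}=(q_1,\dots,q_k)\in\mathbb{D}^k$ be tuples of distinct points. Then $$\mathscr{B}_\omega(\mathfrak{p})=\prod_{j=1}^\ell\frac{z-p_j}{1-\bar p_jz}\Big(\prod_{j=1}^k\frac{z-q_j}{1-\bar q_jz}\Big)^{-1}\cdot\mathscr{B}_\omega(\mathfrak{q}).$$ In particular $\mathscr{B}_\omega(\mathfrak{p})=\prod_{j=1}^\ell\frac{z-p_j}{1-\bar p_jz}\cdot\mathscr{B}_\omega$.
   Context: A Bergman weight $\omega:\mathbb{D}\to\mathbb{R}^+$ is Lebesgue integrable and such that $\mathscr{B}_\omega=L^2(\mathbb{D},\omega\,d\lambda)\cap\mathscr{O}(\mathbb{D})$ is closed in $L^2(\mathbb{D},\omega d\lambda)$ and evaluation functionals are uniformly bounded on compact subsets. For a tuple $\mathfrak{p}$ of distinct points, $\mathscr{B}_\omega(\mathfrak{p})=\{\varphi\in\mathscr{B}_\omega:\varphi(p_1)=\dots=\varphi(p_\ell)=0\}$ (for the empty tuple this is $\mathscr{B}_\omega$). A function times a space denotes the set of products, with removable singularities filled in. *)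

theory Defs
  imports "HOL-Analysis.Analysis"
begin

abbreviation udisc :: "complex set" where "udisc \<equiv> ball 0 1"

definition wsq :: "(complex \<Rightarrow> real) \<Rightarrow> (complex \<Rightarrow> complex) \<Rightarrow> real" where
  "wsq \<omega> f = set_lebesgue_integral lebesgue udisc (\<lambda>z. (cmod (f z))\<^sup>2 * \<omega> z)"

definition wnorm :: "(complex \<Rightarrow> real) \<Rightarrow> (complex \<Rightarrow> complex) \<Rightarrow> real" where
  "wnorm \<omega> f = sqrt (wsq \<omega> f)"

definition wL2 :: "(complex \<Rightarrow> real) \<Rightarrow> (complex \<Rightarrow> complex) \<Rightarrow> bool" where
  "wL2 \<omega> f \<longleftrightarrow> f \<in> borel_measurable lebesgue \<and>
     set_integrable lebesgue udisc (\<lambda>z. (cmod (f z))\<^sup>2 * \<omega> z)"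

definition bergman :: "(complex \<Rightarrow> real) \<Rightarrow> (complex \<Rightarrow> complex) set" where
  "bergman \<omega> = {f. f holomorphic_on udisc \<and> (\<forall>z. z \<notin> udisc \<longrightarrow> f z = 0) \<and> wL2 \<omega> f}"

definition bergman_weight :: "(complex \<Rightarrow> real) \<Rightarrow> bool" where
  "bergman_weight \<omega> \<longleftrightarrow>
     (\<forall>z\<in>udisc. \<omega> z > 0) \<and>
     set_integrable lebesgue udisc \<omega> \<and>
     \<comment> \<open>closedness of the Bergman space in L2(D, omega)\<close>
     (\<forall>fs g. (\<forall>n. fs n \<in> bergman \<omega>) \<longrightarrow> wL2 \<omega> g \<longrightarrow>
        (\<lambda>n. wsq \<omega> (\<lambda>z. fs n z - g z)) \<longlonglongrightarrow> 0 \<longrightarrow>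
        (\<exists>h\<in>bergman \<omega>. AE z in lebesgue. z \<in> udisc \<longrightarrow> g z = h z)) \<and>
     \<comment> \<open>point evaluations uniformly bounded on compact subsets\<close>
     (\<forall>K. compact K \<longrightarrow> K \<subseteq> udisc \<longrightarrow>
        (\<exists>C. \<forall>f\<in>bergman \<omega>. \<forall>z\<in>K. cmod (f z) \<le> C * wnorm \<omega> f))"

definition bergman_zeros :: "(complex \<Rightarrow> real) \<Rightarrow> complex list \<Rightarrow> (complex \<Rightarrow> complex) set" where
  "bergman_zeros \<omega> ps = {f \<in> bergman \<omega>. \<forall>p\<in>set ps. f p = 0}"

definition blaschke :: "complex list \<Rightarrow> complex \<Rightarrow> complex" where
  "blaschke ps z = prod_list (map (\<lambda>p. (z - p) / (1 - cnj p * z)) ps)"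

text \<open>Product of a function with a set of functions, with removable singularities
  filled in: the holomorphic functions on the disc (vanishing off it) that agree with
  g * phi off a finite set, for some phi in S.\<close>
definition fun_times :: "(complex \<Rightarrow> complex) \<Rightarrow> (complex \<Rightarrow> complex) set \<Rightarrow> (complex \<Rightarrow> complex) set" where
  "fun_times g S = {h. h holomorphic_on udisc \<and> (\<forall>z. z \<notin> udisc \<longrightarrow> h z = 0) \<and>
      (\<exists>\<phi>\<in>S. \<exists>F. finite F \<and> (\<forall>z\<in>udisc - F. h z = g z * \<phi> z))}"

end

theory Submission imports Defs "HOL-Complex_Analysis.Cauchy_Integral_Formula" begin

definition PP :: "complex list \<Rightarrow> complex \<Rightarrow> complex" where
  "PP ps z = prod_list (map (\<lambda>p. z - p) ps)"
definition DD :: "complex list \<Rightarrow> complex \<Rightarrow> complex" where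
  "DD ps z = prod_list (map (\<lambda>p. 1 - cnj p * z) ps)"

lemma blaschke_PD: "blaschke ps z = PP ps z / DD ps z"
  by (induction ps) (simp_all add: blaschke_def PP_def DD_def)

lemma PP_hol: "PP ps holomorphic_on S"
  unfolding PP_def by (induction ps) (auto intro!: holomorphic_intros)

lemma DD_hol: "DD ps holomorphic_on S"
  unfolding DD_def by (induction ps) (auto intro!: holomorphic_intros)

lemma DD_nz: "set ps \<subseteq> udisc \<Longrightarrow> z \<in> udisc \<Longrightarrow> DD ps z \<noteq> 0"
proof (induction ps)
  case Nil then show ?case by (simp add: DD_def)
next
  case (Cons a ps)
  have "norm (cnj a * z) < 1"
    using Cons.prems by (simp add: norm_mult mult_strict_mono' abs_less_iff) (metis mult_less_cancel_right2 norm_ge_zero less_le_trans not_le mult_le_one less_imp_le order_le_less_trans mult_left_le_one_le)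
  then have "1 - cnj a * z \<noteq> 0" by auto
  with Cons show ?case by (simp add: DD_def)
qed

lemma PP_zero: "PP ps z = 0 \<longleftrightarrow> z \<in> set ps"
  by (induction ps) (auto simp: PP_def)

lemma blaschke_hol: "set ps \<subseteq> udisc \<Longrightarrow> blaschke ps holomorphic_on udisc"
proof -
  assume a: "set ps \<subseteq> udisc"
  have "(\<lambda>z. PP ps z / DD ps z) holomorphic_on udisc"
    by (rule holomorphic_on_divide[OF PP_hol DD_hol]) (use DD_nz a in auto)
  then show ?thesis by (simp add: blaschke_PD[abs_def])
qed

lemma blaschke_zero: "set ps \<subseteq> udisc \<Longrightarrow> z \<in> udisc \<Longrightarrow> blaschke ps z = 0 \<longleftrightarrow> z \<in> set ps"
  using DD_nz PP_zero by (simp add: blaschke_PD)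

lemma factor_out:
  assumes "f holomorphic_on S" "open S" "distinct ps" "set ps \<subseteq> S" "\<forall>p\<in>set ps. f p = 0"
  shows "\<exists>g. g holomorphic_on S \<and> (\<forall>z\<in>S. f z = PP ps z * g z)"
  using assms
proof (induction ps arbitrary: f)
  case Nil then show ?case by (auto simp: PP_def)
next
  case (Cons a ps)
  define g where "g = (\<lambda>z. if z = a then deriv f a else (f z - f a)/(z-a))"
  have a: "a \<in> interior S" using Cons.prems by (simp add: interior_open)
  have gh: "g holomorphic_on S" unfolding g_def by (rule pole_lemma[OF Cons.prems(1) a])
  have fa: "f a = 0" using Cons.prems by auto
  have fz: "f z = (z - a) * g z" for z
    by (cases "z = a") (auto simp: g_def fa)
  have "\<forall>p\<in>set ps. g p = 0" using Cons.prems by (auto simp: g_def fa)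
  then obtain h where h: "h holomorphic_on S" "\<forall>z\<in>S. g z = PP ps z * h z"
    using Cons.IH[OF gh] Cons.prems by auto
  show ?case
    by (rule exI[of _ h]) (use h fz in \<open>auto simp: PP_def\<close>)
qed

lemma eq_off_finite:
  fixes f g :: "complex \<Rightarrow> complex"
  assumes "continuous_on S f" "continuous_on S g" "open S" "finite G" "\<forall>z\<in>S-G. f z = g z" "z\<in>S"
  shows "f z = g z"
proof -
  have f: "(f \<longlongrightarrow> f z) (at z)" and g: "(g \<longlongrightarrow> g z) (at z)"
    using assms continuous_on_eq_continuous_at isCont_def by blast+
  have e1: "eventually (\<lambda>w. w \<in> S) (at z)"
    using assms eventually_at_topological by blast
  have e2: "eventually (\<lambda>w. w \<notin> G) (at z)"
    using islimpt_finite[OF assms(4)] islimpt_iff_eventually by blast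
  have "eventually (\<lambda>w. f w = g w) (at z)"
    using eventually_conj[OF e1 e2] by eventually_elim (use assms in auto)
  then have "(g \<longlongrightarrow> f z) (at z)" by (rule Lim_transform_eventually[OF f])
  then show ?thesis using g tendsto_unique by (metis at_neq_bot)
qed

lemma factor_bounds:
  fixes a :: complex
  assumes "norm a < 1" "(1 + norm a)/2 \<le> norm z" "norm z < 1"
  shows "(1 - norm a)/4 \<le> norm ((z - a) / (1 - cnj a * z))
       \<and> norm ((z - a) / (1 - cnj a * z)) \<le> 2 / (1 - norm a)"
proof -
  have h2: "(1 - norm a)/2 = (1 + norm a)/2 - norm a" by (simp add: field_simps)
  have n1: "norm (z - a) \<ge> (1 - norm a)/2" using assms norm_triangle_ineq2[of z a] h2 by linarith
  have n2: "norm (z - a) \<le> 2" using assms norm_triangle_ineq4[of z a] by linarith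
  have az: "norm a * norm z \<le> norm a" by (rule mult_left_le) (use assms in auto)
  have d1: "norm (1 - cnj a * z) \<le> 2"
    using norm_triangle_ineq4[of 1 "cnj a * z"] az assms by (simp add: norm_mult)
  have d2: "norm (1 - cnj a * z) \<ge> 1 - norm a"
    using norm_triangle_ineq2[of 1 "cnj a * z"] az by (simp add: norm_mult)
  have pa: "1 - norm a > 0" using assms by simp
  have dpos: "norm (1 - cnj a * z) > 0" using d2 pa by linarith
  have "(1 - norm a)/4 = ((1 - norm a)/2) / 2" by simp
  also have "\<dots> \<le> norm (z - a) / norm (1 - cnj a * z)"
    by (rule frac_le) (use n1 d1 dpos pa in auto)
  finally have A: "(1 - norm a)/4 \<le> norm ((z - a) / (1 - cnj a * z))" by (simp add: norm_divide)
  have "norm (z - a) / norm (1 - cnj a * z) \<le> 2 / (1 - norm a)"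
    by (rule frac_le) (use n2 d2 pa in auto)
  then show ?thesis using A by (simp add: norm_divide)
qed

lemma blaschke_bounds:
  assumes "set ps \<subseteq> udisc"
  shows "\<exists>r<1. \<exists>c>0. \<exists>C. \<forall>z. r \<le> norm z \<longrightarrow> norm z < 1 \<longrightarrow>
           c \<le> norm (blaschke ps z) \<and> norm (blaschke ps z) \<le> C"
  using assms
proof (induction ps)
  case Nil
  have "\<forall>z. 0 \<le> norm z \<longrightarrow> norm z < 1 \<longrightarrow> 1 \<le> norm (blaschke [] z) \<and> norm (blaschke [] z) \<le> 1"
    by (simp add: blaschke_def)
  then show ?case by (meson zero_less_one)
next
  case (Cons a ps)
  then obtain r c C where r: "r < 1" "c > 0" and
    rc: "\<forall>z. r \<le> norm z \<longrightarrow> norm z < 1 \<longrightarrow> c \<le> norm (blaschke ps z) \<and> norm (blaschke ps z) \<le> C"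
    by auto
  have na: "norm a < 1" using Cons.prems by simp
  define r' where "r' = max r ((1 + norm a)/2)"
  have "r' < 1" using r na by (simp add: r'_def)
  moreover have "c * ((1 - norm a)/4) > 0" using r na by simp
  moreover have "\<forall>z. r' \<le> norm z \<longrightarrow> norm z < 1 \<longrightarrow>
     c * ((1 - norm a)/4) \<le> norm (blaschke (a#ps) z) \<and> norm (blaschke (a#ps) z) \<le> C * (2 / (1 - norm a))"
  proof (intro allI impI)
    fix z :: complex assume z: "r' \<le> norm z" "norm z < 1"
    have B: "blaschke (a#ps) z = (z - a) / (1 - cnj a * z) * blaschke ps z"
      by (simp add: blaschke_def)
    have f: "(1 - norm a)/4 \<le> norm ((z - a) / (1 - cnj a * z))
       \<and> norm ((z - a) / (1 - cnj a * z)) \<le> 2 / (1 - norm a)"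
      by (rule factor_bounds) (use na z in \<open>auto simp: r'_def\<close>)
    have g: "c \<le> norm (blaschke ps z) \<and> norm (blaschke ps z) \<le> C" using rc z by (auto simp: r'_def)
    have "c * ((1 - norm a)/4) \<le> norm (blaschke ps z) * norm ((z - a) / (1 - cnj a * z))"
      by (rule mult_mono) (use f g r na in auto)
    moreover have "norm (blaschke ps z) * norm ((z - a) / (1 - cnj a * z)) \<le> C * (2 / (1 - norm a))"
      by (rule mult_mono) (use f g r na in auto)
    moreover have N: "norm (blaschke (a#ps) z) = norm (blaschke ps z) * norm ((z - a) / (1 - cnj a * z))"
      unfolding B norm_mult by (rule mult.commute)
    ultimately show "c * ((1 - norm a)/4) \<le> norm (blaschke (a#ps) z) \<and> norm (blaschke (a#ps) z) \<le> C * (2 / (1 - norm a))"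
      by linarith
  qed
  ultimately show ?case by blast
qed

lemma wL2_dominated:
  assumes w: "bergman_weight \<omega>" and phi: "wL2 \<omega> \<phi>"
    and hh: "h holomorphic_on udisc" and h0: "\<forall>z. z \<notin> udisc \<longrightarrow> h z = 0"
    and r: "r < 1" and bd: "\<forall>z. r \<le> norm z \<longrightarrow> norm z < 1 \<longrightarrow> norm (h z) \<le> C * norm (\<phi> z)"
  shows "wL2 \<omega> h"
proof -
  have wpos: "\<forall>z\<in>udisc. \<omega> z > 0" and wint: "set_integrable lebesgue udisc \<omega>"
    using w by (auto simp: bergman_weight_def)
  have hc: "continuous_on udisc h" using hh by (rule holomorphic_on_imp_continuous_on)
  have "(\<lambda>x. indicator udisc x *\<^sub>R h x) \<in> borel_measurable borel"
    by (rule borel_measurable_continuous_on_indicator[OF _ hc]) auto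
  moreover have "(\<lambda>x. indicator udisc x *\<^sub>R h x) = h"
    using h0 by (auto simp: indicator_def)
  ultimately have hm: "h \<in> borel_measurable lebesgue"
    by (metis measurable_lborel2 measurable_completion)
  define r0 where "r0 = max r 0"
  have r0: "r0 < 1" "0 \<le> r0" "r \<le> r0" using r by (auto simp: r0_def)
  have "compact (h ` cball 0 r0)"
    by (rule compact_continuous_image) (use hc r0 in \<open>auto intro: continuous_on_subset\<close>)
  then obtain M where M: "\<forall>y\<in>h ` cball 0 r0. norm y \<le> M"
    using compact_imp_bounded bounded_iff by metis
  have M0: "0 \<le> M" using M r0 by (metis image_eqI centre_in_cball norm_ge_zero order_trans)
  have pt: "(cmod (h z))\<^sup>2 * \<omega> z \<le> M\<^sup>2 * \<omega> z + C\<^sup>2 * ((cmod (\<phi> z))\<^sup>2 * \<omega> z)" if z: "z \<in> udisc" for z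
  proof -
    have wz: "\<omega> z > 0" using wpos z by auto
    show ?thesis
    proof (cases "norm z \<le> r0")
      case True
      then have "norm (h z) \<le> M" using M by auto
      then have "(cmod (h z))\<^sup>2 \<le> M\<^sup>2" by (simp add: power_mono)
      then have "(cmod (h z))\<^sup>2 * \<omega> z \<le> M\<^sup>2 * \<omega> z" using wz by (simp add: mult_right_mono)
      moreover have "0 \<le> C\<^sup>2 * ((cmod (\<phi> z))\<^sup>2 * \<omega> z)" using wz by simp
      ultimately show ?thesis by linarith
    next
      case False
      then have "norm (h z) \<le> C * norm (\<phi> z)" using bd z r0 by auto
      then have "(cmod (h z))\<^sup>2 \<le> (C * norm (\<phi> z))\<^sup>2" by (simp add: power_mono)
      then have "(cmod (h z))\<^sup>2 * \<omega> z \<le> C\<^sup>2 * ((cmod (\<phi> z))\<^sup>2 * \<omega> z)"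
        using wz by (simp add: mult_right_mono power_mult_distrib mult.assoc)
      moreover have "0 \<le> M\<^sup>2 * \<omega> z" using wz by simp
      ultimately show ?thesis by linarith
    qed
  qed
  have pint: "set_integrable lebesgue udisc (\<lambda>z. (cmod (\<phi> z))\<^sup>2 * \<omega> z)"
    using phi by (simp add: wL2_def)
  have dom: "set_integrable lebesgue udisc (\<lambda>z. M\<^sup>2 * \<omega> z + C\<^sup>2 * ((cmod (\<phi> z))\<^sup>2 * \<omega> z))"
    by (intro set_integral_add set_integrable_mult_right wint pint)
  have wm: "(\<lambda>z. indicator udisc z *\<^sub>R \<omega> z) \<in> borel_measurable lebesgue"
    using wint unfolding set_integrable_def by (rule borel_measurable_integrable)
  have gm: "(\<lambda>z. indicator udisc z *\<^sub>R ((cmod (h z))\<^sup>2 * \<omega> z)) \<in> borel_measurable lebesgue"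
  proof -
    have "(\<lambda>z. (cmod (h z))\<^sup>2 * (indicator udisc z *\<^sub>R \<omega> z)) \<in> borel_measurable lebesgue"
      using hm wm by measurable
    moreover have "(\<lambda>z. (cmod (h z))\<^sup>2 * (indicator udisc z *\<^sub>R \<omega> z)) = (\<lambda>z. indicator udisc z *\<^sub>R ((cmod (h z))\<^sup>2 * \<omega> z))"
      by (auto simp: indicator_def)
    ultimately show ?thesis by simp
  qed
  have "set_integrable lebesgue udisc (\<lambda>z. (cmod (h z))\<^sup>2 * \<omega> z)"
    unfolding set_integrable_def
  proof (rule Bochner_Integration.integrable_bound[OF dom[unfolded set_integrable_def] gm])
    show "AE x in lebesgue. norm (indicator udisc x *\<^sub>R ((cmod (h x))\<^sup>2 * \<omega> x))
        \<le> norm (indicator udisc x *\<^sub>R (M\<^sup>2 * \<omega> x + C\<^sup>2 * ((cmod (\<phi> x))\<^sup>2 * \<omega> x)))"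
    proof (rule AE_I2)
      fix x show "norm (indicator udisc x *\<^sub>R ((cmod (h x))\<^sup>2 * \<omega> x))
        \<le> norm (indicator udisc x *\<^sub>R (M\<^sup>2 * \<omega> x + C\<^sup>2 * ((cmod (\<phi> x))\<^sup>2 * \<omega> x)))"
      proof (cases "x \<in> udisc")
        case True
        have "0 \<le> (cmod (h x))\<^sup>2 * \<omega> x" using wpos True by (simp add: less_imp_le)
        then show ?thesis using pt[OF True] True by simp
      qed simp
    qed
  qed
  then show ?thesis using hm by (simp add: wL2_def)
qed

lemma main_eq:
  assumes w: "bergman_weight \<omega>" and ps: "distinct ps" "set ps \<subseteq> udisc"
    and qs: "distinct qs" "set qs \<subseteq> udisc"
  shows "bergman_zeros \<omega> ps = fun_times (\<lambda>z. blaschke ps z / blaschke qs z) (bergman_zeros \<omega> qs)"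
proof -
  obtain r1 c1 C1 where r1: "r1 < 1" "c1 > 0" and b1: "\<forall>z. r1 \<le> norm z \<longrightarrow> norm z < 1 \<longrightarrow>
           c1 \<le> norm (blaschke ps z) \<and> norm (blaschke ps z) \<le> C1"
    using blaschke_bounds[OF ps(2)] by blast
  obtain r2 c2 C2 where r2: "r2 < 1" "c2 > 0" and b2: "\<forall>z. r2 \<le> norm z \<longrightarrow> norm z < 1 \<longrightarrow>
           c2 \<le> norm (blaschke qs z) \<and> norm (blaschke qs z) \<le> C2"
    using blaschke_bounds[OF qs(2)] by blast
  define r where "r = max r1 r2"
  have r: "r < 1" using r1 r2 by (simp add: r_def)
  show ?thesis
  proof
    show "bergman_zeros \<omega> ps \<subseteq> fun_times (\<lambda>z. blaschke ps z / blaschke qs z) (bergman_zeros \<omega> qs)"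
    proof
      fix f assume f: "f \<in> bergman_zeros \<omega> ps"
      then have fh: "f holomorphic_on udisc" and f0: "\<forall>z. z \<notin> udisc \<longrightarrow> f z = 0"
        and fL: "wL2 \<omega> f" and fp: "\<forall>p\<in>set ps. f p = 0"
        by (auto simp: bergman_zeros_def bergman_def)
      obtain g where gh: "g holomorphic_on udisc" and fg: "\<forall>z\<in>udisc. f z = PP ps z * g z"
        using factor_out[OF fh _ ps(1) ps(2) fp] by auto
      define \<phi> where "\<phi> z = (if z \<in> udisc then g z * DD ps z * blaschke qs z else 0)" for z
      have "(\<lambda>z. g z * DD ps z * blaschke qs z) holomorphic_on udisc"
        by (intro holomorphic_intros gh DD_hol blaschke_hol qs(2))
      then have ph: "\<phi> holomorphic_on udisc"
        by (rule holomorphic_transform) (simp add: \<phi>_def)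
      have p0: "\<forall>z. z \<notin> udisc \<longrightarrow> \<phi> z = 0" by (simp add: \<phi>_def)
      have phiz: "\<phi> z = f z * blaschke qs z / blaschke ps z" if "z \<in> udisc" "z \<notin> set ps" for z
      proof -
        have "DD ps z \<noteq> 0" using DD_nz ps that by auto
        moreover have "PP ps z \<noteq> 0" using PP_zero that by auto
        ultimately show ?thesis using that fg by (simp add: \<phi>_def blaschke_PD field_simps)
      qed
      have bd: "\<forall>z. r \<le> norm z \<longrightarrow> norm z < 1 \<longrightarrow> norm (\<phi> z) \<le> (C2 / c1) * norm (f z)"
      proof (intro allI impI)
        fix z :: complex assume z: "r \<le> norm z" "norm z < 1"
        have B1: "c1 \<le> norm (blaschke ps z)" and B2: "norm (blaschke qs z) \<le> C2"
          using b1 b2 z by (auto simp: r_def)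
        have C20: "0 \<le> C2" using B2 norm_ge_zero order_trans by blast
        have zs: "z \<notin> set ps" using B1 r1 blaschke_zero[OF ps(2)] z by force
        have "norm (\<phi> z) = norm (f z) * norm (blaschke qs z) / norm (blaschke ps z)"
          using phiz[OF _ zs] z by (simp add: norm_mult norm_divide)
        also have "\<dots> \<le> norm (f z) * C2 / c1"
          by (rule frac_le) (use B1 B2 r1 C20 in \<open>auto intro: mult_left_mono\<close>)
        finally show "norm (\<phi> z) \<le> (C2 / c1) * norm (f z)" by (simp add: mult.commute)
      qed
      have pL: "wL2 \<omega> \<phi>" by (rule wL2_dominated[OF w fL ph p0 r bd])
      have pq: "\<forall>q\<in>set qs. \<phi> q = 0"
        using qs(2) blaschke_zero[OF qs(2)] by (auto simp: \<phi>_def)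
      have pB: "\<phi> \<in> bergman_zeros \<omega> qs"
        using ph p0 pL pq by (simp add: bergman_zeros_def bergman_def)
      have eq: "\<forall>z\<in>udisc - (set ps \<union> set qs). f z = blaschke ps z / blaschke qs z * \<phi> z"
      proof
        fix z assume z: "z \<in> udisc - (set ps \<union> set qs)"
        have "blaschke qs z \<noteq> 0" "blaschke ps z \<noteq> 0"
          using z blaschke_zero[OF qs(2)] blaschke_zero[OF ps(2)] by auto
        then show "f z = blaschke ps z / blaschke qs z * \<phi> z" using phiz z by auto
      qed
      show "f \<in> fun_times (\<lambda>z. blaschke ps z / blaschke qs z) (bergman_zeros \<omega> qs)"
        unfolding fun_times_def using fh f0 pB eq by blast
    qed
  next
    show "fun_times (\<lambda>z. blaschke ps z / blaschke qs z) (bergman_zeros \<omega> qs) \<subseteq> bergman_zeros \<omega> ps"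
    proof
      fix h assume "h \<in> fun_times (\<lambda>z. blaschke ps z / blaschke qs z) (bergman_zeros \<omega> qs)"
      then obtain \<phi> F where hh: "h holomorphic_on udisc" and h0: "\<forall>z. z \<notin> udisc \<longrightarrow> h z = 0"
        and pB: "\<phi> \<in> bergman_zeros \<omega> qs" and F: "finite F"
        and hF: "\<forall>z\<in>udisc - F. h z = blaschke ps z / blaschke qs z * \<phi> z"
        unfolding fun_times_def by blast
      then have ph: "\<phi> holomorphic_on udisc" and pL: "wL2 \<omega> \<phi>" and pq: "\<forall>q\<in>set qs. \<phi> q = 0"
        by (auto simp: bergman_zeros_def bergman_def)
      obtain \<psi> where psh: "\<psi> holomorphic_on udisc" and pp: "\<forall>z\<in>udisc. \<phi> z = PP qs z * \<psi> z"
        using factor_out[OF ph _ qs(1) qs(2) pq] by auto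
      have heq: "h z = blaschke ps z * DD qs z * \<psi> z" if z: "z \<in> udisc" for z
      proof (rule eq_off_finite[where S=udisc and G="F \<union> set qs" and f=h and g="\<lambda>z. blaschke ps z * DD qs z * \<psi> z" and z=z])
        show "continuous_on udisc h" using hh by (rule holomorphic_on_imp_continuous_on)
        have "(\<lambda>z. blaschke ps z * DD qs z * \<psi> z) holomorphic_on udisc"
          by (intro holomorphic_intros psh DD_hol blaschke_hol ps(2))
        then show "continuous_on udisc (\<lambda>z. blaschke ps z * DD qs z * \<psi> z)"
          by (rule holomorphic_on_imp_continuous_on)
        show "\<forall>z\<in>udisc - (F \<union> set qs). h z = blaschke ps z * DD qs z * \<psi> z"
        proof
          fix z assume z: "z \<in> udisc - (F \<union> set qs)"
          have "DD qs z \<noteq> 0" using DD_nz qs z by auto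
          moreover have "PP qs z \<noteq> 0" using PP_zero z by auto
          ultimately show "h z = blaschke ps z * DD qs z * \<psi> z"
            using hF pp z by (simp add: blaschke_PD[of qs] field_simps)
        qed
      qed (use z F in auto)
      have hp: "\<forall>p\<in>set ps. h p = 0"
        using heq ps(2) blaschke_zero[OF ps(2)] by auto
      have bd: "\<forall>z. r \<le> norm z \<longrightarrow> norm z < 1 \<longrightarrow> norm (h z) \<le> (C1 / c2) * norm (\<phi> z)"
      proof (intro allI impI)
        fix z :: complex assume z: "r \<le> norm z" "norm z < 1"
        have B1: "norm (blaschke ps z) \<le> C1" and B2: "c2 \<le> norm (blaschke qs z)"
          using b1 b2 z by (auto simp: r_def)
        have C10: "0 \<le> C1" using B1 norm_ge_zero order_trans by blast
        have zs: "z \<notin> set qs" using B2 r2 blaschke_zero[OF qs(2)] z by force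
        have "DD qs z \<noteq> 0" using DD_nz qs z by auto
        moreover have "PP qs z \<noteq> 0" using PP_zero zs by auto
        ultimately have "h z = blaschke ps z * \<phi> z / blaschke qs z"
          using heq pp z by (simp add: blaschke_PD[of qs] field_simps)
        then have "norm (h z) = norm (blaschke ps z) * norm (\<phi> z) / norm (blaschke qs z)"
          by (simp add: norm_mult norm_divide)
        also have "\<dots> \<le> C1 * norm (\<phi> z) / c2"
          by (rule frac_le) (use B1 B2 r2 C10 in \<open>auto intro: mult_right_mono\<close>)
        finally show "norm (h z) \<le> (C1 / c2) * norm (\<phi> z)" by (simp add: mult.commute)
      qed
      have hL: "wL2 \<omega> h" by (rule wL2_dominated[OF w pL hh h0 r bd])
      show "h \<in> bergman_zeros \<omega> ps"
        using hh h0 hL hp by (simp add: bergman_zeros_def bergman_def)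
    qed
  qed
qed

theorem proposition1p12:
  fixes \<omega> :: "complex \<Rightarrow> real" and ps qs :: "complex list"
  assumes "bergman_weight \<omega>"
    and "distinct ps" and "set ps \<subseteq> udisc"
    and "distinct qs" and "set qs \<subseteq> udisc"
  shows "bergman_zeros \<omega> ps =
           fun_times (\<lambda>z. blaschke ps z / blaschke qs z) (bergman_zeros \<omega> qs)
      \<and> bergman_zeros \<omega> ps = fun_times (blaschke ps) (bergman \<omega>)"
proof
  show "bergman_zeros \<omega> ps =
           fun_times (\<lambda>z. blaschke ps z / blaschke qs z) (bergman_zeros \<omega> qs)"
    by (rule main_eq) (use assms in auto)
  have "bergman_zeros \<omega> ps =
           fun_times (\<lambda>z. blaschke ps z / blaschke [] z) (bergman_zeros \<omega> [])"
    by (rule main_eq) (use assms in auto)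
  moreover have "bergman_zeros \<omega> [] = bergman \<omega>" by (simp add: bergman_zeros_def)
  moreover have "(\<lambda>z. blaschke ps z / blaschke [] z) = blaschke ps" by (simp add: blaschke_def[abs_def])
  ultimately show "bergman_zeros \<omega> ps = fun_times (blaschke ps) (bergman \<omega>)" by simp
qed

end
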